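(* For every prime power $q$, the class $\mathcal{M}_q$ of $GF(q)$-chordal matroids is closed under induced restrictions: if $M\in\mathcal{M}_q$ and $F$ is a flat of $M$, then $M|F\in\mathcal{M}_q$.
   Context: All matroids are simple. For matroids $M_1,M_2$ whose ground sets meet in a set $T$ that is a modular flat of $M_1$ with $M_1|T=M_2|T=N$, the generalized parallel connection $P_N(M_1,M_2)$ is the matroid on $E(M_1)\cup E(M_2)$ whose flats are the sets $X$ with $X\cap E(M_i)$ a flat of $M_i$ for $i=1,2$ (if $T=\emptyset$ this is $M_1\oplus M_2$). $\mathcal{M}_q$ is the class of matroids that can be built from projective geometries over $GF(q)$ by a sequence of generalized parallel connections across projective geometries over $GF(q)$; its members are called $GF(q)$-chordal. An induced restriction of $M$ is a restriction of $M$ to a flat. *)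

theory Defs
  imports Main
begin

type_synonym 'a matroid = "'a set \<times> ('a set \<Rightarrow> bool)"

definition gnd :: "'a matroid \<Rightarrow> 'a set" where "gnd M = fst M"
definition indep :: "'a matroid \<Rightarrow> 'a set \<Rightarrow> bool" where "indep M = snd M"

definition matroid :: "'a matroid \<Rightarrow> bool" where
  "matroid M \<longleftrightarrow> finite (gnd M) \<and> indep M {}
     \<and> (\<forall>X. indep M X \<longrightarrow> X \<subseteq> gnd M)
     \<and> (\<forall>X Y. indep M X \<and> Y \<subseteq> X \<longrightarrow> indep M Y)
     \<and> (\<forall>X Y. indep M X \<and> indep M Y \<and> card X < card Y
          \<longrightarrow> (\<exists>e \<in> Y - X. indep M (insert e X)))"

definition simple_matroid :: "'a matroid \<Rightarrow> bool" where
  "simple_matroid M \<longleftrightarrow> matroid M \<and> (\<forall>X \<subseteq> gnd M. card X \<le> 2 \<longrightarrow> indep M X)"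

definition rk :: "'a matroid \<Rightarrow> 'a set \<Rightarrow> nat" where
  "rk M X = Max (card ` {Y. Y \<subseteq> X \<and> indep M Y})"

definition flat :: "'a matroid \<Rightarrow> 'a set \<Rightarrow> bool" where
  "flat M X \<longleftrightarrow> X \<subseteq> gnd M \<and> (\<forall>e \<in> gnd M - X. rk M (insert e X) > rk M X)"

definition modular_flat :: "'a matroid \<Rightarrow> 'a set \<Rightarrow> bool" where
  "modular_flat M X \<longleftrightarrow> flat M X \<and>
     (\<forall>Y. flat M Y \<longrightarrow> rk M X + rk M Y = rk M (X \<inter> Y) + rk M (X \<union> Y))"

definition restr :: "'a matroid \<Rightarrow> 'a set \<Rightarrow> 'a matroid" where
  "restr M X = (X, \<lambda>Y. indep M Y \<and> Y \<subseteq> X)"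

definition iso :: "'a matroid \<Rightarrow> 'b matroid \<Rightarrow> bool" where
  "iso M M' \<longleftrightarrow> (\<exists>f. bij_betw f (gnd M) (gnd M') \<and>
      (\<forall>X \<subseteq> gnd M. indep M X \<longleftrightarrow> indep M' (f ` X)))"

text \<open>The projective geometry PG(n-1, F) over the finite field 'f: its points are the
one-dimensional subspaces of F^n (vectors are functions nat => 'f vanishing from n on),
each point represented as the set of nonzero multiples of a nonzero vector; a set of points
is independent iff (any choice of) representatives is linearly independent.\<close>
definition fvec :: "nat \<Rightarrow> (nat \<Rightarrow> 'f::field) set" where
  "fvec n = {v. \<forall>i\<ge>n. v i = 0}"

definition pg_points :: "nat \<Rightarrow> (nat \<Rightarrow> 'f::field) set set" where
  "pg_points n = {{(\<lambda>i. c * v i) | c. c \<noteq> 0} | v. v \<in> fvec n \<and> v \<noteq> (\<lambda>_. 0)}"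

definition pg_indep :: "nat \<Rightarrow> (nat \<Rightarrow> 'f::field) set set \<Rightarrow> bool" where
  "pg_indep n S \<longleftrightarrow> S \<subseteq> pg_points n \<and> finite S \<and>
     (\<forall>rep a. (\<forall>p\<in>S. rep p \<in> p) \<longrightarrow>
        (\<lambda>i. \<Sum>p\<in>S. a p * rep p i) = (\<lambda>_. 0) \<longrightarrow> (\<forall>p\<in>S. a p = 0))"

definition PG :: "nat \<Rightarrow> (nat \<Rightarrow> 'f::field) set matroid" where
  "PG n = (pg_points n, pg_indep n)"

definition is_PG :: "'f::{finite,field} itself \<Rightarrow> 'a matroid \<Rightarrow> bool" where
  "is_PG F M \<longleftrightarrow> (\<exists>n. iso M (PG n :: (nat \<Rightarrow> 'f) set matroid))"

text \<open>M is the generalized parallel connection P_N(M1,M2): the ground sets meet in a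
modular flat T of M1 with M1|T = M2|T = N, and M is the matroid on the union whose flats
are exactly the sets meeting each E(Mi) in a flat of Mi.\<close>
definition is_gpc :: "'a matroid \<Rightarrow> 'a matroid \<Rightarrow> 'a matroid \<Rightarrow> bool" where
  "is_gpc M1 M2 M \<longleftrightarrow> matroid M \<and> gnd M = gnd M1 \<union> gnd M2 \<and>
     (\<forall>X. flat M X \<longleftrightarrow> X \<subseteq> gnd M \<and> flat M1 (X \<inter> gnd M1) \<and> flat M2 (X \<inter> gnd M2))"

text \<open>The class M_q of GF(q)-chordal matroids, with the field GF(q) given as the type 'f.\<close>
inductive chordal :: "'f::{finite,field} itself \<Rightarrow> 'a matroid \<Rightarrow> bool" for F where
  base: "simple_matroid M \<Longrightarrow> is_PG F M \<Longrightarrow> chordal F M"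
| gpc: "chordal F M1 \<Longrightarrow> chordal F M2 \<Longrightarrow>
        modular_flat M1 (gnd M1 \<inter> gnd M2) \<Longrightarrow>
        restr M1 (gnd M1 \<inter> gnd M2) = restr M2 (gnd M1 \<inter> gnd M2) \<Longrightarrow>
        is_PG F (restr M1 (gnd M1 \<inter> gnd M2)) \<Longrightarrow>
        is_gpc M1 M2 M \<Longrightarrow> chordal F M"

end

theory Submission
  imports Defs
begin


lemma m_fin: "matroid M \<Longrightarrow> finite (gnd M)" by (simp add: matroid_def)
lemma m_empty: "matroid M \<Longrightarrow> indep M {}" by (simp add: matroid_def)
lemma m_sub: "matroid M \<Longrightarrow> indep M X \<Longrightarrow> X \<subseteq> gnd M" by (simp add: matroid_def)
lemma m_down: "matroid M \<Longrightarrow> indep M X \<Longrightarrow> Y \<subseteq> X \<Longrightarrow> indep M Y"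
  unfolding matroid_def by blast
lemma m_aug: "matroid M \<Longrightarrow> indep M X \<Longrightarrow> indep M Y \<Longrightarrow> card X < card Y \<Longrightarrow> \<exists>e\<in>Y-X. indep M (insert e X)"
proof -
  assume "matroid M" "indep M X" "indep M Y" "card X < card Y"
  moreover have "\<forall>X Y. indep M X \<and> indep M Y \<and> card X < card Y
          \<longrightarrow> (\<exists>e \<in> Y - X. indep M (insert e X))" using \<open>matroid M\<close> by (simp add: matroid_def)
  ultimately show ?thesis by blast
qed
lemma m_finI: "matroid M \<Longrightarrow> indep M X \<Longrightarrow> finite X"
  using m_fin m_sub finite_subset by metis

lemma rk_set_fin: "matroid M \<Longrightarrow> finite {Y. Y \<subseteq> S \<and> indep M Y}"
proof -
  assume m: "matroid M"
  have "{Y. Y \<subseteq> S \<and> indep M Y} \<subseteq> Pow (gnd M)" using m_sub[OF m] by blast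
  then show ?thesis using m_fin[OF m] finite_subset by blast
qed

lemma rk_ge: "matroid M \<Longrightarrow> Y \<subseteq> S \<Longrightarrow> indep M Y \<Longrightarrow> card Y \<le> rk M S"
  unfolding rk_def by (rule Max_ge) (auto intro: rk_set_fin)

lemma rk_obtain: "matroid M \<Longrightarrow> \<exists>Y. Y \<subseteq> S \<and> indep M Y \<and> card Y = rk M S"
proof -
  assume m: "matroid M"
  have "rk M S \<in> card ` {Y. Y \<subseteq> S \<and> indep M Y}" unfolding rk_def
    apply (rule Max_in) using rk_set_fin[OF m] m_empty[OF m] by auto
  then show ?thesis by auto
qed

lemma rk_le: "matroid M \<Longrightarrow> (\<And>Y. Y \<subseteq> S \<Longrightarrow> indep M Y \<Longrightarrow> card Y \<le> k) \<Longrightarrow> rk M S \<le> k"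
  using rk_obtain by metis

lemma rk_indep: "matroid M \<Longrightarrow> indep M Y \<Longrightarrow> rk M Y = card Y"
proof -
  assume m: "matroid M" and Y: "indep M Y"
  have "rk M Y \<le> card Y"
    by (rule rk_le[OF m]) (intro card_mono, rule m_finI[OF m Y], assumption)
  moreover have "card Y \<le> rk M Y" using rk_ge[OF m order_refl Y] .
  ultimately show ?thesis by simp
qed

lemma rk_mono: "matroid M \<Longrightarrow> A \<subseteq> B \<Longrightarrow> rk M A \<le> rk M B"
proof -
  assume m: "matroid M" and AB: "A \<subseteq> B"
  obtain Y where "Y \<subseteq> A" "indep M Y" "card Y = rk M A" using rk_obtain[OF m] by blast
  then show ?thesis using rk_ge[OF m, of Y B] AB by simp
qed

lemma extend: "matroid M \<Longrightarrow> I \<subseteq> S \<Longrightarrow> indep M I \<Longrightarrow> \<exists>J. I \<subseteq> J \<and> J \<subseteq> S \<and> indep M J \<and> card J = rk M S"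
proof (induction "rk M S - card I" arbitrary: I)
  case 0
  then show ?case using rk_ge[of M I S] by auto
next
  case (Suc x)
  obtain K where K: "K \<subseteq> S" "indep M K" "card K = rk M S" using rk_obtain[OF Suc.prems(1)] by blast
  have "card I < card K" using Suc.hyps(2) K by auto
  then obtain e where e: "e \<in> K - I" "indep M (insert e I)" using m_aug[OF Suc.prems(1) Suc.prems(3) K(2)] by blast
  have fI: "finite I" using m_finI Suc.prems by blast
  have "x = rk M S - card (insert e I)" using Suc.hyps(2) e fI by auto
  from Suc.hyps(1)[OF this Suc.prems(1) _ e(2)] e K obtain J where
     "insert e I \<subseteq> J \<and> J \<subseteq> S \<and> indep M J \<and> card J = rk M S" using Suc.prems by blast
  then show ?case by blast
qed

lemma submod: "matroid M \<Longrightarrow> rk M (A \<union> B) + rk M (A \<inter> B) \<le> rk M A + rk M B"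
proof -
  assume m: "matroid M"
  obtain I where I: "I \<subseteq> A \<inter> B" "indep M I" "card I = rk M (A \<inter> B)" using rk_obtain[OF m] by blast
  obtain JA where JA: "I \<subseteq> JA" "JA \<subseteq> A" "indep M JA" "card JA = rk M A"
    using extend[OF m _ I(2), of A] I by blast
  obtain J where J: "JA \<subseteq> J" "J \<subseteq> A \<union> B" "indep M J" "card J = rk M (A \<union> B)"
    using extend[OF m _ JA(3), of "A \<union> B"] JA by blast
  have fJ: "finite J" using m_finI[OF m J(3)] .
  have "card (J \<inter> A) \<le> rk M A" by (rule rk_ge[OF m]) (auto intro: m_down[OF m J(3)])
  moreover have "card JA \<le> card (J \<inter> A)" using J JA fJ by (intro card_mono) auto
  ultimately have eqA: "card (J \<inter> A) = card JA" using JA by linarith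
  have "card (J \<inter> A \<inter> B) \<le> rk M (A \<inter> B)" by (rule rk_ge[OF m]) (auto intro: m_down[OF m J(3)])
  moreover have "card I \<le> card (J \<inter> A \<inter> B)" using J JA I fJ by (intro card_mono) auto
  ultimately have eqAB: "card (J \<inter> A \<inter> B) = card I" using I by linarith
  have cB: "card (J \<inter> B) \<le> rk M B" by (rule rk_ge[OF m]) (auto intro: m_down[OF m J(3)])
  have u: "(J \<inter> A) \<union> (J \<inter> B) = J" using J by auto
  have i: "(J \<inter> A) \<inter> (J \<inter> B) = J \<inter> A \<inter> B" by auto
  have "card (J \<inter> A) + card (J \<inter> B) = card ((J \<inter> A) \<union> (J \<inter> B)) + card ((J \<inter> A) \<inter> (J \<inter> B))"
    by (rule card_Un_Int) (use fJ in auto)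
  then have "card J + card (J \<inter> A \<inter> B) = card (J \<inter> A) + card (J \<inter> B)" unfolding u i by simp
  then show ?thesis using eqA eqAB cB J(4) JA(4) I(3) by linarith
qed

lemma rk_insert_closed: "matroid M \<Longrightarrow> Z \<subseteq> X \<Longrightarrow> rk M (insert e Z) \<le> rk M Z \<Longrightarrow> rk M (insert e X) \<le> rk M X"
proof (cases "e \<in> X")
  case False
  assume m: "matroid M" and "Z \<subseteq> X" "rk M (insert e Z) \<le> rk M Z"
  moreover have "insert e Z \<union> X = insert e X" "insert e Z \<inter> X = Z" using False \<open>Z \<subseteq> X\<close> by auto
  ultimately show ?thesis using submod[OF m, of "insert e Z" X] by simp
qed (simp add: insert_absorb)

lemma flat_Int: "matroid M \<Longrightarrow> flat M A \<Longrightarrow> flat M B \<Longrightarrow> flat M (A \<inter> B)"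
proof -
  assume m: "matroid M" and A: "flat M A" and B: "flat M B"
  show ?thesis unfolding flat_def
  proof (intro conjI ballI)
    show "A \<inter> B \<subseteq> gnd M" using A by (auto simp: flat_def)
    fix e assume e: "e \<in> gnd M - A \<inter> B"
    show "rk M (A \<inter> B) < rk M (insert e (A \<inter> B))"
    proof (rule ccontr)
      assume "\<not> ?thesis"
      then have c: "rk M (insert e (A \<inter> B)) \<le> rk M (A \<inter> B)" by simp
      show False
      proof (cases "e \<in> A")
        case True
        then have "e \<in> gnd M - B" using e by auto
        then have "rk M B < rk M (insert e B)" using B by (auto simp: flat_def)
        then show False using rk_insert_closed[OF m _ c, of B] by auto
      next
        case False
        then have "e \<in> gnd M - A" using e by auto
        then have "rk M A < rk M (insert e A)" using A by (auto simp: flat_def)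
        then show False using rk_insert_closed[OF m _ c, of A] by auto
      qed
    qed
  qed
qed

lemma rk_restr: "Y \<subseteq> X \<Longrightarrow> rk (restr M X) Y = rk M Y"
proof -
  assume "Y \<subseteq> X"
  then have "{Z. Z \<subseteq> Y \<and> indep (restr M X) Z} = {Z. Z \<subseteq> Y \<and> indep M Z}"
    by (auto simp: restr_def indep_def)
  then show ?thesis by (simp add: rk_def)
qed

lemma gnd_restr[simp]: "gnd (restr M X) = X" by (simp add: restr_def gnd_def)
lemma indep_restr[simp]: "indep (restr M X) Y \<longleftrightarrow> indep M Y \<and> Y \<subseteq> X" by (simp add: restr_def indep_def)

lemma matroid_restr: "matroid M \<Longrightarrow> X \<subseteq> gnd M \<Longrightarrow> matroid (restr M X)"
proof -
  assume m: "matroid M" and X: "X \<subseteq> gnd M"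
  have 1: "finite X" using m_fin[OF m] X finite_subset by blast
  have 2: "indep M {}" using m_empty[OF m] by simp
  have 3: "\<forall>A B. (indep M A \<and> A \<subseteq> X) \<and> B \<subseteq> A \<longrightarrow> indep M B \<and> B \<subseteq> X"
  proof (intro allI impI)
    fix A B assume "(indep M A \<and> A \<subseteq> X) \<and> B \<subseteq> A"
    then show "indep M B \<and> B \<subseteq> X" using m_down[OF m, of A B] by auto
  qed
  have 4: "\<forall>A B. (indep M A \<and> A \<subseteq> X) \<and> (indep M B \<and> B \<subseteq> X) \<and> card A < card B
     \<longrightarrow> (\<exists>e\<in>B - A. indep M (insert e A) \<and> insert e A \<subseteq> X)"
  proof (intro allI impI)
    fix A B
    assume h: "(indep M A \<and> A \<subseteq> X) \<and> (indep M B \<and> B \<subseteq> X) \<and> card A < card B"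
    then obtain e where "e \<in> B - A" "indep M (insert e A)" using m_aug[OF m] by blast
    then show "\<exists>e\<in>B - A. indep M (insert e A) \<and> insert e A \<subseteq> X" using h by blast
  qed
  show ?thesis unfolding matroid_def gnd_restr indep_restr
    apply (rule conjI, rule 1)
    apply (rule conjI, simp add: 2)
    apply (rule conjI, blast)
    apply (rule conjI, rule 3)
    by (rule 4)
qed

lemma flat_restr: "matroid M \<Longrightarrow> flat M X \<Longrightarrow> flat (restr M X) Z \<longleftrightarrow> Z \<subseteq> X \<and> flat M Z"
proof -
  assume m: "matroid M" and X: "flat M X"
  show ?thesis
  proof
    assume Z: "flat (restr M X) Z"
    then have ZX: "Z \<subseteq> X" by (simp add: flat_def)
    have "flat M Z" unfolding flat_def
    proof (intro conjI ballI)
      show "Z \<subseteq> gnd M" using ZX X by (auto simp: flat_def)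
      fix e assume e: "e \<in> gnd M - Z"
      show "rk M Z < rk M (insert e Z)"
      proof (cases "e \<in> X")
        case True
        then show ?thesis using Z e ZX by (auto simp: flat_def rk_restr)
      next
        case False
        have "e \<in> gnd M - X" using e False by auto
        then have "rk M X < rk M (insert e X)" using X by (auto simp: flat_def)
        then show ?thesis using rk_insert_closed[OF m ZX, of e] by linarith
      qed
    qed
    then show "Z \<subseteq> X \<and> flat M Z" using ZX by blast
  next
    assume "Z \<subseteq> X \<and> flat M Z"
    then show "flat (restr M X) Z" using X by (auto simp: flat_def rk_restr)
  qed
qed

lemma modular_restr: "matroid M \<Longrightarrow> modular_flat M T \<Longrightarrow> flat M F \<Longrightarrow> modular_flat (restr M F) (T \<inter> F)"
proof -
  assume m: "matroid M" and T: "modular_flat M T" and F: "flat M F"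
  have fT: "flat M T" using T by (simp add: modular_flat_def)
  show ?thesis unfolding modular_flat_def
  proof (intro conjI allI impI)
    show "flat (restr M F) (T \<inter> F)" using flat_restr[OF m F] flat_Int[OF m fT F] by auto
    fix Y assume "flat (restr M F) Y"
    then have YF: "Y \<subseteq> F" and Y: "flat M Y" using flat_restr[OF m F] by auto
    have e1: "rk M T + rk M Y = rk M (T \<inter> Y) + rk M (T \<union> Y)" using T Y by (simp add: modular_flat_def)
    have e2: "rk M T + rk M F = rk M (T \<inter> F) + rk M (T \<union> F)" using T F by (simp add: modular_flat_def)
    have s3: "rk M (T \<union> F) + rk M ((T \<inter> F) \<union> Y) \<le> rk M (T \<union> Y) + rk M F"
    proof -
      have "(T \<union> Y) \<union> F = T \<union> F" "(T \<union> Y) \<inter> F = (T \<inter> F) \<union> Y" using YF by auto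
      then show ?thesis using submod[OF m, of "T \<union> Y" F] by simp
    qed
    have s4: "rk M (T \<union> Y) + rk M (T \<inter> F) \<le> rk M T + rk M ((T \<inter> F) \<union> Y)"
    proof -
      have "T \<union> ((T \<inter> F) \<union> Y) = T \<union> Y" "T \<inter> ((T \<inter> F) \<union> Y) = T \<inter> F" using YF by auto
      then show ?thesis using submod[OF m, of T "(T \<inter> F) \<union> Y"] by simp
    qed
    have "T \<inter> F \<inter> Y = T \<inter> Y" using YF by auto
    then show "rk (restr M F) (T \<inter> F) + rk (restr M F) Y =
          rk (restr M F) (T \<inter> F \<inter> Y) + rk (restr M F) (T \<inter> F \<union> Y)"
    proof -
      have "rk (restr M F) (T \<inter> F) = rk M (T \<inter> F)" "rk (restr M F) Y = rk M Y"
        "rk (restr M F) (T \<inter> F \<inter> Y) = rk M (T \<inter> Y)" "rk (restr M F) (T \<inter> F \<union> Y) = rk M (T \<inter> F \<union> Y)"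
        using YF \<open>T \<inter> F \<inter> Y = T \<inter> Y\<close> by (auto simp: rk_restr intro!: rk_restr)
      then show ?thesis using e1 e2 s3 s4 by linarith
    qed
  qed
qed



definition isof :: "('a \<Rightarrow> 'b) \<Rightarrow> 'a matroid \<Rightarrow> 'b matroid \<Rightarrow> bool" where
  "isof f M N \<longleftrightarrow> bij_betw f (gnd M) (gnd N) \<and> (\<forall>X \<subseteq> gnd M. indep M X \<longleftrightarrow> indep N (f ` X))"

lemma iso_isof: "iso M N \<longleftrightarrow> (\<exists>f. isof f M N)" by (simp add: iso_def isof_def)

lemma isof_sym: "isof f M N \<Longrightarrow> isof (inv_into (gnd M) f) N M"
proof -
  assume h: "isof f M N"
  let ?g = "inv_into (gnd M) f"
  have b: "bij_betw f (gnd M) (gnd N)" using h by (simp add: isof_def)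
  have b': "bij_betw ?g (gnd N) (gnd M)" using bij_betw_inv_into[OF b] .
  show ?thesis unfolding isof_def
  proof (intro conjI allI impI)
    show "bij_betw ?g (gnd N) (gnd M)" by (rule b')
    fix Y assume Y: "Y \<subseteq> gnd N"
    have gY: "?g ` Y \<subseteq> gnd M" using b' Y by (auto simp: bij_betw_def)
    have "f ` (?g ` Y) = Y" using b Y by (auto simp: bij_betw_def image_image f_inv_into_f[of _ f "gnd M"] intro: image_eqI[OF f_inv_into_f[symmetric]])
    then show "indep N Y \<longleftrightarrow> indep M (?g ` Y)" using h gY by (auto simp: isof_def)
  qed
qed

lemma iso_sym: "iso M N \<Longrightarrow> iso N M" using isof_sym iso_isof by metis

lemma isof_trans: "isof f M N \<Longrightarrow> isof g N P \<Longrightarrow> isof (g \<circ> f) M P"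
proof -
  assume h1: "isof f M N" and h2: "isof g N P"
  show ?thesis unfolding isof_def
  proof (intro conjI allI impI)
    show "bij_betw (g \<circ> f) (gnd M) (gnd P)" using h1 h2 bij_betw_trans by (auto simp: isof_def)
    fix X assume X: "X \<subseteq> gnd M"
    then have "f ` X \<subseteq> gnd N" using h1 by (auto simp: isof_def bij_betw_def)
    then show "indep M X \<longleftrightarrow> indep P ((g \<circ> f) ` X)" using h1 h2 X by (simp add: isof_def image_comp)
  qed
qed

lemma iso_trans: "iso M N \<Longrightarrow> iso N P \<Longrightarrow> iso M P" using isof_trans iso_isof by metis

lemma isof_restr: "isof f M N \<Longrightarrow> X \<subseteq> gnd M \<Longrightarrow> isof f (restr M X) (restr N (f ` X))"
proof -
  assume h: "isof f M N" and X: "X \<subseteq> gnd M"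
  have b: "bij_betw f (gnd M) (gnd N)" using h by (simp add: isof_def)
  have inj: "inj_on f (gnd M)" using b by (simp add: bij_betw_def)
  show ?thesis unfolding isof_def gnd_restr indep_restr
  proof (intro conjI allI impI)
    show "bij_betw f X (f ` X)" using inj X by (meson bij_betw_imageI inj_on_subset)
    fix Y assume Y: "Y \<subseteq> X"
    have "f ` Y \<subseteq> f ` X" using Y by blast
    then show "indep M Y \<and> Y \<subseteq> X \<longleftrightarrow> indep N (f ` Y) \<and> f ` Y \<subseteq> f ` X"
      using h X Y by (auto simp: isof_def)
  qed
qed

lemma isof_indep_image:
  assumes h: "isof f M N" and s: "\<And>Y. indep N Y \<Longrightarrow> Y \<subseteq> gnd N" and Z: "indep N Z"
  shows "\<exists>Y \<subseteq> gnd M. Z = f ` Y \<and> indep M Y"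
proof -
  have b: "bij_betw f (gnd M) (gnd N)" using h by (simp add: isof_def)
  let ?Y = "gnd M \<inter> f -` Z"
  have "f ` ?Y = Z"
  proof
    show "Z \<subseteq> f ` ?Y"
    proof
      fix x assume x: "x \<in> Z"
      then have "x \<in> f ` gnd M" using b s[OF Z] by (auto simp: bij_betw_def)
      then obtain y where "y \<in> gnd M" "x = f y" by auto
      then show "x \<in> f ` ?Y" using x by auto
    qed
  qed auto
  moreover have "indep M ?Y" using h Z \<open>f ` ?Y = Z\<close> by (auto simp: isof_def)
  ultimately show ?thesis by blast
qed

lemma image_vimage_Int: "Y \<subseteq> f ` A \<Longrightarrow> f ` (A \<inter> f -` Y) = Y"
proof
  assume h: "Y \<subseteq> f ` A"
  show "Y \<subseteq> f ` (A \<inter> f -` Y)"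
  proof
    fix x assume x: "x \<in> Y"
    then have "x \<in> f ` A" using h by blast
    then obtain y where "y \<in> A" "x = f y" by auto
    then show "x \<in> f ` (A \<inter> f -` Y)" using x by auto
  qed
qed auto

lemma iso_matroid:
  assumes m: "matroid M" and h: "isof f M N" and s: "\<And>Y. indep N Y \<Longrightarrow> Y \<subseteq> gnd N"
  shows "matroid N"
proof -
  have b: "bij_betw f (gnd M) (gnd N)" using h by (simp add: isof_def)
  have inj: "inj_on f (gnd M)" using b by (simp add: bij_betw_def)
  have ind: "\<And>X. X \<subseteq> gnd M \<Longrightarrow> indep M X \<longleftrightarrow> indep N (f ` X)" using h by (simp add: isof_def)
  have 1: "finite (gnd N)" using b m_fin[OF m] bij_betw_finite by blast
  have 2: "indep N {}" using ind[of "{}"] m_empty[OF m] by simp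
  have 0: "\<forall>X. indep N X \<longrightarrow> X \<subseteq> gnd N" using s by blast
  have 3: "\<forall>X Y. indep N X \<and> Y \<subseteq> X \<longrightarrow> indep N Y"
  proof (intro allI impI)
    fix X Y assume a: "indep N X \<and> Y \<subseteq> X"
    then have aX: "indep N X" by simp
    obtain X' where X': "X' \<subseteq> gnd M" "X = f ` X'" "indep M X'" using isof_indep_image[OF h s aX] by blast
    let ?Y = "X' \<inter> f -` Y"
    have "f ` ?Y = Y" using a X' image_vimage_Int[of Y f X'] by simp
    moreover have "indep M ?Y" using m_down[OF m X'(3)] by blast
    moreover have "?Y \<subseteq> gnd M" using X' by blast
    ultimately show "indep N Y" using ind[of ?Y] by simp
  qed
  have 4: "\<forall>X Y. indep N X \<and> indep N Y \<and> card X < card Y \<longrightarrow> (\<exists>e \<in> Y - X. indep N (insert e X))"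
  proof (intro allI impI)
    fix X Y assume a: "indep N X \<and> indep N Y \<and> card X < card Y"
    then have aX: "indep N X" and aY: "indep N Y" by simp_all
    obtain X' where X': "X' \<subseteq> gnd M" "X = f ` X'" "indep M X'" using isof_indep_image[OF h s aX] by blast
    obtain Y' where Y': "Y' \<subseteq> gnd M" "Y = f ` Y'" "indep M Y'" using isof_indep_image[OF h s aY] by blast
    have "card X = card X'" by (simp add: X'(2) card_image inj_on_subset[OF inj X'(1)])
    moreover have "card Y = card Y'" by (simp add: Y'(2) card_image inj_on_subset[OF inj Y'(1)])
    ultimately obtain e where e: "e \<in> Y' - X'" "indep M (insert e X')" using m_aug[OF m X'(3) Y'(3)] a by auto
    have eM: "e \<in> gnd M" using e Y' by blast
    have "f e \<in> Y" using e Y' by blast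
    moreover have "f e \<notin> X" using inj_on_image_mem_iff[OF inj eM X'(1)] e X'(2) by blast
    moreover have "indep N (insert (f e) X)"
    proof -
      have "insert e X' \<subseteq> gnd M" using eM X' by blast
      then have "indep N (f ` insert e X')" using ind e by blast
      then show ?thesis using X'(2) by simp
    qed
    ultimately show "\<exists>e \<in> Y - X. indep N (insert e X)" by blast
  qed
  show ?thesis unfolding matroid_def
    apply (rule conjI, rule 1)
    apply (rule conjI, rule 2)
    apply (rule conjI, rule 0)
    apply (rule conjI, rule 3)
    by (rule 4)
qed

lemma isof_rk:
  assumes m: "matroid M" and h: "isof f M N" and s: "\<And>Y. indep N Y \<Longrightarrow> Y \<subseteq> gnd N" and X: "X \<subseteq> gnd M"
  shows "rk N (f ` X) = rk M X"
proof -
  have b: "bij_betw f (gnd M) (gnd N)" using h by (simp add: isof_def)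
  have inj: "inj_on f (gnd M)" using b by (simp add: bij_betw_def)
  have ind: "\<And>X. X \<subseteq> gnd M \<Longrightarrow> indep M X \<longleftrightarrow> indep N (f ` X)" using h by (simp add: isof_def)
  have "card ` {Y. Y \<subseteq> f ` X \<and> indep N Y} = card ` {Y. Y \<subseteq> X \<and> indep M Y}"
  proof (intro equalityI subsetI)
    fix c assume "c \<in> card ` {Y. Y \<subseteq> f ` X \<and> indep N Y}"
    then obtain Y where Y: "Y \<subseteq> f ` X" "indep N Y" "c = card Y" by auto
    obtain Y' where Y': "Y' \<subseteq> gnd M" "Y = f ` Y'" "indep M Y'" using isof_indep_image[OF h s Y(2)] by blast
    have YX: "Y' \<subseteq> X"
    proof
      fix y assume y: "y \<in> Y'"
      then have "f y \<in> f ` X" using Y Y' by blast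
      moreover have "y \<in> gnd M" using y Y' by blast
      ultimately show "y \<in> X" using inj_on_image_mem_iff[OF inj _ X] by blast
    qed
    let ?Z = "Y'"
    have "f ` ?Z = Y" using Y' by simp
    moreover have "indep M ?Z" using Y' by blast
    moreover have "card (f ` ?Z) = card ?Z" using inj Y' by (meson card_image inj_on_subset)
    ultimately show "c \<in> card ` {Y. Y \<subseteq> X \<and> indep M Y}" using Y YX by (auto intro!: image_eqI[of _ _ ?Z])
  next
    fix c assume "c \<in> card ` {Y. Y \<subseteq> X \<and> indep M Y}"
    then obtain Y where Y: "Y \<subseteq> X" "indep M Y" "c = card Y" by auto
    have "card (f ` Y) = card Y" using inj X Y by (meson card_image inj_on_subset order_trans)
    moreover have "indep N (f ` Y)" using ind[of Y] Y X by auto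
    ultimately show "c \<in> card ` {Y. Y \<subseteq> f ` X \<and> indep N Y}" using Y by (auto intro!: image_eqI[of _ _ "f ` Y"])
  qed
  then show ?thesis by (simp add: rk_def)
qed



lemma gnd_PG[simp]: "gnd (PG n) = pg_points n" by (simp add: PG_def gnd_def)
lemma indep_PG[simp]: "indep (PG n) = pg_indep n" by (simp add: PG_def indep_def)

definition Pt :: "(nat \<Rightarrow> 'f::field) \<Rightarrow> (nat \<Rightarrow> 'f) set" where
  "Pt v = {(\<lambda>i. c * v i) | c. c \<noteq> 0}"

definition rep0 :: "(nat \<Rightarrow> 'f::field) set \<Rightarrow> (nat \<Rightarrow> 'f)" where
  "rep0 P = (SOME v. v \<in> P)"

lemma pg_points_Pt: "pg_points n = {Pt v | v. v \<in> fvec n \<and> v \<noteq> (\<lambda>_. 0)}"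
  by (simp add: pg_points_def Pt_def)

lemma Pt_in: "v \<in> fvec n \<Longrightarrow> v \<noteq> (\<lambda>_. 0) \<Longrightarrow> Pt v \<in> pg_points n"
  unfolding pg_points_Pt by blast

lemma self_in_Pt: "v \<in> Pt v"
  unfolding Pt_def by (rule CollectI, rule exI[of _ 1]) simp

lemma mem_Pt: "u \<in> Pt v \<Longrightarrow> \<exists>c. c \<noteq> 0 \<and> u = (\<lambda>i. c * v i)"
  unfolding Pt_def by blast

lemma nz_fun: "v \<noteq> (\<lambda>_. 0) \<Longrightarrow> c \<noteq> 0 \<Longrightarrow> (\<lambda>i. c * v i) \<noteq> (\<lambda>_. (0::'f::field))"
proof
  assume "v \<noteq> (\<lambda>_. 0)" "c \<noteq> 0" "(\<lambda>i. c * v i) = (\<lambda>_. 0)"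
  then have "\<And>i. v i = 0" by (metis mult_eq_0_iff)
  then show False using \<open>v \<noteq> (\<lambda>_. 0)\<close> by auto
qed

lemma Pt_mem_eq: "u \<in> Pt v \<Longrightarrow> Pt u = Pt (v::nat \<Rightarrow> 'f::field)"
proof -
  assume "u \<in> Pt v"
  then obtain c where c: "c \<noteq> 0" "u = (\<lambda>i. c * v i)" using mem_Pt by blast
  show ?thesis
  proof
    show "Pt u \<subseteq> Pt v"
    proof
      fix x assume "x \<in> Pt u"
      then obtain d where d: "d \<noteq> 0" "x = (\<lambda>i. d * u i)" using mem_Pt by blast
      have "x = (\<lambda>i. (d * c) * v i)" using c d by (simp add: mult.assoc)
      moreover have "d * c \<noteq> 0" using c d by simp
      ultimately show "x \<in> Pt v" unfolding Pt_def by blast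
    qed
    show "Pt v \<subseteq> Pt u"
    proof
      fix x assume "x \<in> Pt v"
      then obtain d where d: "d \<noteq> 0" "x = (\<lambda>i. d * v i)" using mem_Pt by blast
      have "x = (\<lambda>i. (d / c) * u i)" using c d by (auto simp: field_simps)
      moreover have "d / c \<noteq> 0" using c d by simp
      ultimately show "x \<in> Pt u" unfolding Pt_def by blast
    qed
  qed
qed

lemma fvec_smult: "v \<in> fvec n \<Longrightarrow> (\<lambda>i. c * v i) \<in> fvec n" by (simp add: fvec_def)

lemma point_rep0:
  assumes "P \<in> pg_points n"
  shows "rep0 P \<in> P" "rep0 P \<in> fvec n" "rep0 P \<noteq> (\<lambda>_. 0)" "P = Pt (rep0 P)"
proof -
  obtain v where v: "v \<in> fvec n" "v \<noteq> (\<lambda>_. 0)" "P = Pt v" using assms unfolding pg_points_Pt by blast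
  show r: "rep0 P \<in> P" unfolding rep0_def using v self_in_Pt by (metis someI)
  then obtain c where c: "c \<noteq> 0" "rep0 P = (\<lambda>i. c * v i)" using mem_Pt v by blast
  show "rep0 P \<in> fvec n" using c v fvec_smult by metis
  show "rep0 P \<noteq> (\<lambda>_. 0)" using c v nz_fun by metis
  show "P = Pt (rep0 P)" using Pt_mem_eq r v by metis
qed

lemma point_mem:
  assumes "P \<in> pg_points n" "u \<in> P"
  shows "u \<in> fvec n" "u \<noteq> (\<lambda>_. 0)" "P = Pt u"
proof -
  obtain v where v: "v \<in> fvec n" "v \<noteq> (\<lambda>_. 0)" "P = Pt v" using assms unfolding pg_points_Pt by blast
  then obtain c where c: "c \<noteq> 0" "u = (\<lambda>i. c * v i)" using mem_Pt assms by blast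
  show "u \<in> fvec n" using c v fvec_smult by metis
  show "u \<noteq> (\<lambda>_. 0)" using c v nz_fun by metis
  show "P = Pt u" using Pt_mem_eq assms v by metis
qed

lemma pg_indep_fixed:
  assumes S: "S \<subseteq> pg_points n" "finite S" and r: "\<And>p. p \<in> S \<Longrightarrow> r p \<in> p"
  shows "pg_indep n S \<longleftrightarrow> (\<forall>a. (\<lambda>i. \<Sum>p\<in>S. a p * r p i) = (\<lambda>_. 0) \<longrightarrow> (\<forall>p\<in>S. a p = 0))"
proof
  assume "pg_indep n S"
  then show "\<forall>a. (\<lambda>i. \<Sum>p\<in>S. a p * r p i) = (\<lambda>_. 0) \<longrightarrow> (\<forall>p\<in>S. a p = 0)"
    unfolding pg_indep_def using r by blast
next
  assume h: "\<forall>a. (\<lambda>i. \<Sum>p\<in>S. a p * r p i) = (\<lambda>_. 0) \<longrightarrow> (\<forall>p\<in>S. a p = 0)"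
  show "pg_indep n S" unfolding pg_indep_def
  proof (intro conjI allI impI ballI)
    show "S \<subseteq> pg_points n" "finite S" using S by auto
    fix rep a p
    assume rep: "\<forall>p\<in>S. rep p \<in> p" and rel: "(\<lambda>i. \<Sum>p\<in>S. a p * rep p i) = (\<lambda>_. 0)" and p: "p \<in> S"
    have ex: "\<And>q. q \<in> S \<Longrightarrow> \<exists>c. c \<noteq> 0 \<and> rep q = (\<lambda>i. c * r q i)"
    proof -
      fix q assume q: "q \<in> S"
      then have "q = Pt (r q)" using point_mem(3)[of q n "r q"] S r by blast
      then show "\<exists>c. c \<noteq> 0 \<and> rep q = (\<lambda>i. c * r q i)" using rep q mem_Pt by metis
    qed
    define c where "c q = (SOME c. c \<noteq> 0 \<and> rep q = (\<lambda>i. c * r q i))" for q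
    have c: "\<And>q. q \<in> S \<Longrightarrow> c q \<noteq> 0 \<and> rep q = (\<lambda>i. c q * r q i)"
      unfolding c_def using ex by (rule someI_ex)
    have "(\<lambda>i. \<Sum>q\<in>S. (a q * c q) * r q i) = (\<lambda>i. \<Sum>q\<in>S. a q * rep q i)"
    proof
      fix i show "(\<Sum>q\<in>S. (a q * c q) * r q i) = (\<Sum>q\<in>S. a q * rep q i)"
        by (rule sum.cong) (auto simp: c mult.assoc)
    qed
    then have "(\<lambda>i. \<Sum>q\<in>S. (a q * c q) * r q i) = (\<lambda>_. 0)" using rel by simp
    then have "\<forall>q\<in>S. a q * c q = 0" using spec[OF h, of "\<lambda>q. a q * c q"] by simp
    then have "a p * c p = 0" using p by blast
    then show "a p = 0" using c[OF p] by simp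
  qed
qed



locale pgctx =
  fixes n :: nat and Z :: "(nat \<Rightarrow> 'f::field) set set" and B :: "(nat \<Rightarrow> 'f) set set"
    and k :: nat and e :: "nat \<Rightarrow> (nat \<Rightarrow> 'f) set"
  assumes mat: "matroid (PG n :: (nat \<Rightarrow> 'f) set matroid)" and flZ: "flat (PG n) Z"
    and BZ: "B \<subseteq> Z" and Bind: "pg_indep n B" and cardB: "card B = rk (PG n) Z"
    and kdef: "k = card B" and ebij: "bij_betw e {..<k} B"
begin

definition b :: "nat \<Rightarrow> nat \<Rightarrow> 'f" where "b i = rep0 (e i)"
definition L :: "(nat \<Rightarrow> 'f) \<Rightarrow> nat \<Rightarrow> 'f" where "L w = (\<lambda>j. \<Sum>i<k. w i * b i j)"

lemma Zpts: "Z \<subseteq> pg_points n" using flZ by (simp add: flat_def)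
lemma Bpts: "B \<subseteq> pg_points n" using Bind by (simp add: pg_indep_def)
lemma finB: "finite B" using Bind by (simp add: pg_indep_def)
lemma e_in: "i < k \<Longrightarrow> e i \<in> B" using ebij by (auto simp: bij_betw_def)
lemma e_pt: "i < k \<Longrightarrow> e i \<in> pg_points n" using e_in Bpts by blast
lemma b_props: "i < k \<Longrightarrow> b i \<in> e i \<and> b i \<in> fvec n \<and> b i \<noteq> (\<lambda>_. 0)"
  unfolding b_def using point_rep0[OF e_pt] by blast
lemma inv_e: "i < k \<Longrightarrow> inv_into {..<k} e (e i) = i"
  using ebij by (simp add: bij_betw_def inv_into_f_f)

lemma L_fvec: "L w \<in> fvec n"
  unfolding fvec_def L_def using b_props by (auto simp: fvec_def)

lemma L_zero: "L (\<lambda>_. 0) = (\<lambda>_. 0)" by (simp add: L_def)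

lemma L_smult: "L (\<lambda>i. c * w i) = (\<lambda>j. c * L w j)"
  by (simp add: L_def sum_distrib_left mult.assoc)

lemma L_diff: "L (\<lambda>i. w i - u i) = (\<lambda>j. L w j - L u j)"
  by (simp add: L_def sum_subtractf left_diff_distrib)

lemma L_sum: "L (\<lambda>i. \<Sum>p\<in>S. a p * w p i) = (\<lambda>j. \<Sum>p\<in>S. a p * L (w p) j)"
proof
  fix j
  have "L (\<lambda>i. \<Sum>p\<in>S. a p * w p i) j = (\<Sum>i<k. \<Sum>p\<in>S. a p * w p i * b i j)"
    by (simp add: L_def sum_distrib_right)
  also have "\<dots> = (\<Sum>p\<in>S. \<Sum>i<k. a p * (w p i * b i j))" by (subst sum.swap) (simp add: mult.assoc)
  also have "\<dots> = (\<Sum>p\<in>S. a p * L (w p) j)" by (simp add: L_def sum_distrib_left)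
  finally show "L (\<lambda>i. \<Sum>p\<in>S. a p * w p i) j = (\<Sum>p\<in>S. a p * L (w p) j)" .
qed

lemma sumB: "(\<Sum>q\<in>B. a q * rep0 q j) = (\<Sum>i<k. a (e i) * b i j)"
  using sum.reindex_bij_betw[OF ebij, of "\<lambda>q. a q * rep0 q j"] by (simp add: b_def)

lemma B_fixed: "\<forall>a. (\<lambda>i. \<Sum>p\<in>B. a p * rep0 p i) = (\<lambda>_. 0) \<longrightarrow> (\<forall>p\<in>B. a p = 0)"
proof -
  have "\<And>p. p \<in> B \<Longrightarrow> rep0 p \<in> p" using point_rep0(1) Bpts by blast
  then show ?thesis using pg_indep_fixed[OF Bpts finB] Bind by blast
qed

lemma L_kernel:
  assumes w: "w \<in> fvec k" and Lw: "L w = (\<lambda>_. 0)"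
  shows "w = (\<lambda>_. 0)"
proof -
  define a where "a q = w (inv_into {..<k} e q)" for q
  have "(\<lambda>j. \<Sum>p\<in>B. a p * rep0 p j) = (\<lambda>_. 0)"
  proof
    fix j
    have "(\<Sum>p\<in>B. a p * rep0 p j) = (\<Sum>i<k. a (e i) * b i j)" by (rule sumB)
    also have "\<dots> = (\<Sum>i<k. w i * b i j)" by (rule sum.cong) (auto simp: a_def inv_e)
    also have "\<dots> = L w j" by (simp add: L_def)
    finally show "(\<Sum>p\<in>B. a p * rep0 p j) = 0" using Lw by (simp add: fun_eq_iff)
  qed
  then have z: "\<forall>p\<in>B. a p = 0" using B_fixed by blast
  show ?thesis
  proof
    fix i show "w i = 0"
    proof (cases "i < k")
      case True
      then show ?thesis using z e_in[OF True] by (auto simp: a_def inv_e)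
    next
      case False
      then show ?thesis using w by (simp add: fvec_def)
    qed
  qed
qed

lemma L_inj: "w \<in> fvec k \<Longrightarrow> u \<in> fvec k \<Longrightarrow> L w = L u \<Longrightarrow> w = u"
proof -
  assume w: "w \<in> fvec k" and u: "u \<in> fvec k" and eq: "L w = L u"
  have "(\<lambda>i. w i - u i) \<in> fvec k" using w u by (simp add: fvec_def)
  moreover have "L (\<lambda>i. w i - u i) = (\<lambda>_. 0)" using eq by (simp add: L_diff)
  ultimately have "(\<lambda>i. w i - u i) = (\<lambda>_. 0)" by (rule L_kernel)
  then show "w = u" by (simp add: fun_eq_iff)
qed

lemma L_nz: "w \<in> fvec k \<Longrightarrow> w \<noteq> (\<lambda>_. 0) \<Longrightarrow> L w \<noteq> (\<lambda>_. 0)"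
  using L_kernel by blast

lemma L_img_Pt: "L ` Pt w = Pt (L w)"
proof
  show "L ` Pt w \<subseteq> Pt (L w)" unfolding Pt_def by (auto simp: L_smult)
  show "Pt (L w) \<subseteq> L ` Pt w"
  proof
    fix x assume "x \<in> Pt (L w)"
    then obtain c where c: "c \<noteq> 0" "x = (\<lambda>i. c * L w i)" using mem_Pt by blast
    then have "x = L (\<lambda>i. c * w i)" by (simp add: L_smult)
    moreover have "(\<lambda>i. c * w i) \<in> Pt w" using c unfolding Pt_def by blast
    ultimately show "x \<in> L ` Pt w" by blast
  qed
qed

lemma rkB: "rk (PG n) B = k" using rk_indep[OF mat] Bind kdef by simp
lemma rkZ: "rk (PG n) Z = k" using cardB kdef by simp

lemma rk_dep_insert:
  assumes pB: "p \<notin> B" and dep: "\<not> pg_indep n (insert p B)"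
  shows "rk (PG n) (insert p B) \<le> k"
proof (rule rk_le[OF mat])
  fix Y assume Y: "Y \<subseteq> insert p B" "indep (PG n) Y"
  have c: "card (insert p B) = Suc k" using pB finB kdef by simp
  have "card Y \<le> card (insert p B)" using Y finB by (intro card_mono) auto
  moreover have "card Y \<noteq> card (insert p B)"
  proof
    assume "card Y = card (insert p B)"
    then have "Y = insert p B" using Y finB card_subset_eq by (metis finite_insert)
    then show False using Y dep by simp
  qed
  ultimately show "card Y \<le> k" using c by simp
qed

lemma span_in_Z:
  assumes w: "w \<in> fvec k" "w \<noteq> (\<lambda>_. 0)"
  shows "Pt (L w) \<in> Z"
proof (rule ccontr)
  let ?p = "Pt (L w)"
  assume pZ: "?p \<notin> Z"
  have pP: "?p \<in> pg_points n" using Pt_in[OF L_fvec L_nz[OF w]] .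
  have pB: "?p \<notin> B" using pZ BZ by blast
  have dep: "\<not> pg_indep n (insert ?p B)"
  proof
    assume ind: "pg_indep n (insert ?p B)"
    define r where "r = rep0(?p := L w)"
    have rin: "\<And>q. q \<in> insert ?p B \<Longrightarrow> r q \<in> q"
    proof -
      fix q assume q: "q \<in> insert ?p B"
      show "r q \<in> q"
      proof (cases "q = ?p")
        case True
        then show ?thesis using self_in_Pt by (simp add: r_def)
      next
        case False
        then have "q \<in> B" using q by simp
        then show ?thesis using False point_rep0(1) Bpts by (auto simp: r_def)
      qed
    qed
    define a where "a q = (if q = ?p then -1 else w (inv_into {..<k} e q))" for q
    have "(\<lambda>j. \<Sum>q\<in>insert ?p B. a q * r q j) = (\<lambda>_. 0)"
    proof
      fix j
      have "(\<Sum>q\<in>insert ?p B. a q * r q j) = a ?p * r ?p j + (\<Sum>q\<in>B. a q * r q j)"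
        using finB pB by simp
      also have "(\<Sum>q\<in>B. a q * r q j) = (\<Sum>q\<in>B. w (inv_into {..<k} e q) * rep0 q j)"
        using pB by (intro sum.cong) (auto simp: a_def r_def)
      also have "\<dots> = (\<Sum>i<k. w (inv_into {..<k} e (e i)) * b i j)" by (rule sumB)
      also have "\<dots> = L w j" unfolding L_def by (rule sum.cong) (auto simp: inv_e)
      finally show "(\<Sum>q\<in>insert ?p B. a q * r q j) = 0" by (simp add: a_def r_def)
    qed
    moreover have "insert ?p B \<subseteq> pg_points n" using pP Bpts by blast
    ultimately have "a ?p = 0" using pg_indep_fixed[of "insert ?p B" n r] rin finB ind by blast
    then show False by (simp add: a_def)
  qed
  have "rk (PG n) (Z \<union> insert ?p B) + rk (PG n) (Z \<inter> insert ?p B) \<le> rk (PG n) Z + rk (PG n) (insert ?p B)"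
    by (rule submod[OF mat])
  moreover have "Z \<union> insert ?p B = insert ?p Z" using BZ by blast
  moreover have "rk (PG n) B \<le> rk (PG n) (Z \<inter> insert ?p B)" using BZ by (intro rk_mono[OF mat]) blast
  ultimately have "rk (PG n) (insert ?p Z) \<le> rk (PG n) Z" using rk_dep_insert[OF pB dep] rkB rkZ by simp
  moreover have "rk (PG n) Z < rk (PG n) (insert ?p Z)" using flZ pP pZ by (simp add: flat_def)
  ultimately show False by simp
qed

lemma Z_span:
  assumes qZ: "q \<in> Z"
  shows "\<exists>w \<in> fvec k. w \<noteq> (\<lambda>_. 0) \<and> q = Pt (L w)"
proof (cases "q \<in> B")
  case True
  then obtain i where i: "i < k" "q = e i" using ebij by (auto simp: bij_betw_def)
  define w where "w = (\<lambda>i'. if i' = i then (1::'f) else 0)"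
  have wf: "w \<in> fvec k" using i by (simp add: w_def fvec_def)
  have "L w = b i"
  proof
    fix j
    have "L w j = (\<Sum>i'<k. (if i' = i then b i' j else 0))" unfolding L_def w_def
      by (rule sum.cong) auto
    also have "\<dots> = b i j" using i by simp
    finally show "L w j = b i j" .
  qed
  moreover have "q = Pt (b i)" using point_rep0(4)[OF e_pt[OF i(1)]] i by (simp add: b_def)
  moreover have "w \<noteq> (\<lambda>_. 0)" by (auto simp: w_def fun_eq_iff)
  ultimately show ?thesis using wf by metis
next
  case False
  have qP: "q \<in> pg_points n" using qZ Zpts by blast
  have sub: "insert q B \<subseteq> pg_points n" using qP Bpts by blast
  have dep: "\<not> pg_indep n (insert q B)"
  proof
    assume "pg_indep n (insert q B)"
    then have "card (insert q B) \<le> rk (PG n) Z" using rk_ge[OF mat, of "insert q B" Z] qZ BZ by simp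
    then show False using False finB rkZ kdef by simp
  qed
  have rin: "\<And>x. x \<in> insert q B \<Longrightarrow> rep0 x \<in> x" using point_rep0(1) sub by blast
  obtain a where rel: "(\<lambda>j. \<Sum>x\<in>insert q B. a x * rep0 x j) = (\<lambda>_. 0)" and nz: "\<exists>x\<in>insert q B. a x \<noteq> 0"
    using pg_indep_fixed[OF sub _ rin] finB dep by auto
  have split: "\<And>j. a q * rep0 q j + (\<Sum>x\<in>B. a x * rep0 x j) = 0"
  proof -
    fix j
    have "(\<Sum>x\<in>insert q B. a x * rep0 x j) = 0" using rel by (simp add: fun_eq_iff)
    then show "a q * rep0 q j + (\<Sum>x\<in>B. a x * rep0 x j) = 0" using finB False by simp
  qed
  have aq: "a q \<noteq> 0"
  proof
    assume a0: "a q = 0"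
    then have "(\<lambda>j. \<Sum>x\<in>B. a x * rep0 x j) = (\<lambda>_. 0)" using split by (simp add: fun_eq_iff)
    then have "\<forall>x\<in>B. a x = 0" using B_fixed by blast
    then show False using nz a0 by blast
  qed
  define w where "w i = (if i < k then - a (e i) / a q else 0)" for i
  have wf: "w \<in> fvec k" by (simp add: w_def fvec_def)
  have Lw: "L w = rep0 q"
  proof
    fix j
    have "L w j = (\<Sum>i<k. (- 1 / a q) * (a (e i) * b i j))" unfolding L_def w_def
      by (rule sum.cong) auto
    also have "\<dots> = (- 1 / a q) * (\<Sum>i<k. a (e i) * b i j)" by (simp add: sum_distrib_left)
    also have "\<dots> = (- 1 / a q) * (\<Sum>x\<in>B. a x * rep0 x j)" by (simp add: sumB)
    also have "(\<Sum>x\<in>B. a x * rep0 x j) = - (a q * rep0 q j)"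
      using split[of j] by (metis add.commute eq_neg_iff_add_eq_0)
    also have "(- 1 / a q) * (- (a q * rep0 q j)) = rep0 q j" using aq by (simp add: field_simps)
    finally show "L w j = rep0 q j" .
  qed
  have "w \<noteq> (\<lambda>_. 0)" using Lw L_zero point_rep0(3)[OF qP] by auto
  moreover have "q = Pt (L w)" using Lw point_rep0(4)[OF qP] by simp
  ultimately show ?thesis using wf by blast
qed

definition g :: "(nat \<Rightarrow> 'f) set \<Rightarrow> (nat \<Rightarrow> 'f) set" where "g P = L ` P"

lemma g_Pt: "P \<in> pg_points k \<Longrightarrow> g P = Pt (L (rep0 P))"
proof -
  assume P: "P \<in> pg_points k"
  have "g P = L ` Pt (rep0 P)" unfolding g_def using point_rep0(4)[OF P] by simp
  then show ?thesis using L_img_Pt by simp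
qed

lemma g_in: "P \<in> pg_points k \<Longrightarrow> g P \<in> Z"
proof -
  assume P: "P \<in> pg_points k"
  have "Pt (L (rep0 P)) \<in> Z" by (rule span_in_Z[OF point_rep0(2)[OF P] point_rep0(3)[OF P]])
  then show ?thesis using g_Pt[OF P] by simp
qed

lemma g_inj: "inj_on g (pg_points k)"
proof (rule inj_onI)
  fix P Q assume P: "P \<in> pg_points k" and Q: "Q \<in> pg_points k" and eq: "g P = g Q"
  have "L (rep0 P) \<in> g Q" using eq point_rep0(1)[OF P] unfolding g_def by blast
  then obtain u where u: "u \<in> Q" "L (rep0 P) = L u" unfolding g_def by blast
  have "rep0 P = u" using L_inj[OF point_rep0(2)[OF P] point_mem(1)[OF Q u(1)] u(2)] .
  then show "P = Q" using point_rep0(4)[OF P] point_mem(3)[OF Q u(1)] by simp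
qed

lemma g_surj: "g ` pg_points k = Z"
proof
  show "g ` pg_points k \<subseteq> Z" using g_in by blast
  show "Z \<subseteq> g ` pg_points k"
  proof
    fix q assume "q \<in> Z"
    then obtain w where w: "w \<in> fvec k" "w \<noteq> (\<lambda>_. 0)" "q = Pt (L w)" using Z_span by blast
    have "Pt w \<in> pg_points k" using Pt_in w by blast
    moreover have "g (Pt w) = q" using w L_img_Pt by (simp add: g_def)
    ultimately show "q \<in> g ` pg_points k" by blast
  qed
qed

lemma comb_fvec: "(\<And>P. P \<in> S \<Longrightarrow> P \<in> pg_points k) \<Longrightarrow> (\<lambda>i. \<Sum>P\<in>S. c P * rep0 P i) \<in> fvec k"
proof -
  assume h: "\<And>P. P \<in> S \<Longrightarrow> P \<in> pg_points k"
  show ?thesis unfolding fvec_def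
  proof (intro CollectI allI impI)
    fix i assume i: "k \<le> i"
    have "\<forall>P\<in>S. rep0 P i = 0"
    proof
      fix P assume "P \<in> S"
      then have "rep0 P \<in> fvec k" using point_rep0(2) h by blast
      then show "rep0 P i = 0" using i by (simp add: fvec_def)
    qed
    then show "(\<Sum>P\<in>S. c P * rep0 P i) = 0" by simp
  qed
qed

lemma g_indep:
  assumes S: "S \<subseteq> pg_points k"
  shows "pg_indep k S \<longleftrightarrow> pg_indep n (g ` S)"
proof (cases "finite S")
  case False
  have "inj_on g S" by (rule inj_on_subset[OF g_inj S])
  then have "\<not> finite (g ` S)" using False by (simp add: finite_image_iff)
  then show ?thesis using False by (simp add: pg_indep_def)
next
  case fin: True
  have injS: "inj_on g S" by (rule inj_on_subset[OF g_inj S])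
  have gS: "g ` S \<subseteq> pg_points n"
  proof
    fix q assume "q \<in> g ` S"
    then obtain P where "P \<in> S" "q = g P" by blast
    then have "q \<in> Z" using g_in S by blast
    then show "q \<in> pg_points n" using Zpts by blast
  qed
  define R where "R q = L (rep0 (inv_into S g q))" for q
  have Rg: "\<And>P. P \<in> S \<Longrightarrow> R (g P) = L (rep0 P)"
  proof -
    fix P assume "P \<in> S"
    then have "inv_into S g (g P) = P" by (rule inv_into_f_f[OF injS])
    then show "R (g P) = L (rep0 P)" by (simp add: R_def)
  qed
  have Rin: "\<And>q. q \<in> g ` S \<Longrightarrow> R q \<in> q"
  proof -
    fix q assume "q \<in> g ` S"
    then obtain P where P: "P \<in> S" "q = g P" by blast
    then have "R q = L (rep0 P)" using Rg by simp
    moreover have "P \<in> pg_points k" using P S by blast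
    then have "g P = Pt (L (rep0 P))" by (rule g_Pt)
    ultimately show "R q \<in> q" using P self_in_Pt by simp
  qed
  have rS: "\<And>P. P \<in> S \<Longrightarrow> rep0 P \<in> P"
  proof -
    fix P assume "P \<in> S"
    then have "P \<in> pg_points k" using S by blast
    then show "rep0 P \<in> P" by (rule point_rep0(1))
  qed
  have key: "\<And>a. (\<lambda>j. \<Sum>q\<in>g ` S. a q * R q j) = L (\<lambda>i. \<Sum>P\<in>S. a (g P) * rep0 P i)"
  proof -
    fix a
    have "(\<lambda>j. \<Sum>q\<in>g ` S. a q * R q j) = (\<lambda>j. \<Sum>P\<in>S. a (g P) * L (rep0 P) j)"
    proof
      fix j
      have "(\<Sum>q\<in>g ` S. a q * R q j) = (\<Sum>P\<in>S. a (g P) * R (g P) j)" using sum.reindex[OF injS] by simp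
      also have "\<dots> = (\<Sum>P\<in>S. a (g P) * L (rep0 P) j)" by (rule sum.cong) (auto simp: Rg)
      finally show "(\<Sum>q\<in>g ` S. a q * R q j) = (\<Sum>P\<in>S. a (g P) * L (rep0 P) j)" .
    qed
    also have "\<dots> = L (\<lambda>i. \<Sum>P\<in>S. a (g P) * rep0 P i)" by (simp add: L_sum)
    finally show "(\<lambda>j. \<Sum>q\<in>g ` S. a q * R q j) = L (\<lambda>i. \<Sum>P\<in>S. a (g P) * rep0 P i)" .
  qed
  have kz: "\<And>c. L (\<lambda>i. \<Sum>P\<in>S. c P * rep0 P i) = (\<lambda>_. 0) \<longleftrightarrow> (\<lambda>i. \<Sum>P\<in>S. c P * rep0 P i) = (\<lambda>_. 0)"
  proof -
    fix c
    have cf: "(\<lambda>i. \<Sum>P\<in>S. c P * rep0 P i) \<in> fvec k" by (rule comb_fvec) (use S in blast)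
    show "L (\<lambda>i. \<Sum>P\<in>S. c P * rep0 P i) = (\<lambda>_. 0) \<longleftrightarrow> (\<lambda>i. \<Sum>P\<in>S. c P * rep0 P i) = (\<lambda>_. 0)"
    proof
      assume "L (\<lambda>i. \<Sum>P\<in>S. c P * rep0 P i) = (\<lambda>_. 0)"
      then show "(\<lambda>i. \<Sum>P\<in>S. c P * rep0 P i) = (\<lambda>_. 0)" by (rule L_kernel[OF cf])
    qed (simp add: L_zero)
  qed
  have Ik: "pg_indep k S \<longleftrightarrow> (\<forall>c. (\<lambda>i. \<Sum>P\<in>S. c P * rep0 P i) = (\<lambda>_. 0) \<longrightarrow> (\<forall>P\<in>S. c P = 0))"
    using pg_indep_fixed[OF S fin rS] .
  have In: "pg_indep n (g ` S) \<longleftrightarrow> (\<forall>a. (\<lambda>j. \<Sum>q\<in>g ` S. a q * R q j) = (\<lambda>_. 0) \<longrightarrow> (\<forall>q\<in>g ` S. a q = 0))"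
    using pg_indep_fixed[OF gS finite_imageI[OF fin] Rin] .
  show ?thesis
  proof
    assume "pg_indep k S"
    then have h: "\<forall>c. (\<lambda>i. \<Sum>P\<in>S. c P * rep0 P i) = (\<lambda>_. 0) \<longrightarrow> (\<forall>P\<in>S. c P = 0)" using Ik by blast
    have "\<forall>a. (\<lambda>j. \<Sum>q\<in>g ` S. a q * R q j) = (\<lambda>_. 0) \<longrightarrow> (\<forall>q\<in>g ` S. a q = 0)"
    proof (intro allI impI)
      fix a assume "(\<lambda>j. \<Sum>q\<in>g ` S. a q * R q j) = (\<lambda>_. 0)"
      then have "(\<lambda>i. \<Sum>P\<in>S. a (g P) * rep0 P i) = (\<lambda>_. 0)" using key[of a] kz[of "\<lambda>P. a (g P)"] by simp
      then have "\<forall>P\<in>S. a (g P) = 0" using spec[OF h, of "\<lambda>P. a (g P)"] by simp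
      then show "\<forall>q\<in>g ` S. a q = 0" by blast
    qed
    then show "pg_indep n (g ` S)" using In by blast
  next
    assume "pg_indep n (g ` S)"
    then have h: "\<forall>a. (\<lambda>j. \<Sum>q\<in>g ` S. a q * R q j) = (\<lambda>_. 0) \<longrightarrow> (\<forall>q\<in>g ` S. a q = 0)" using In by blast
    have "\<forall>c. (\<lambda>i. \<Sum>P\<in>S. c P * rep0 P i) = (\<lambda>_. 0) \<longrightarrow> (\<forall>P\<in>S. c P = 0)"
    proof (intro allI impI)
      fix c assume c0: "(\<lambda>i. \<Sum>P\<in>S. c P * rep0 P i) = (\<lambda>_. 0)"
      define a where "a q = c (inv_into S g q)" for q
      have ag: "\<And>P. P \<in> S \<Longrightarrow> a (g P) = c P"
      proof -
        fix P assume "P \<in> S"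
        then have "inv_into S g (g P) = P" by (rule inv_into_f_f[OF injS])
        then show "a (g P) = c P" by (simp add: a_def)
      qed
      have "(\<lambda>i. \<Sum>P\<in>S. a (g P) * rep0 P i) = (\<lambda>i. \<Sum>P\<in>S. c P * rep0 P i)"
      proof
        fix i show "(\<Sum>P\<in>S. a (g P) * rep0 P i) = (\<Sum>P\<in>S. c P * rep0 P i)"
          by (rule sum.cong) (auto simp: ag)
      qed
      then have "(\<lambda>j. \<Sum>q\<in>g ` S. a q * R q j) = (\<lambda>_. 0)" using key[of a] c0 L_zero by simp
      then have "\<forall>q\<in>g ` S. a q = 0" using spec[OF h, of a] by blast
      then show "\<forall>P\<in>S. c P = 0" using ag by auto
    qed
    then show "pg_indep k S" using Ik by blast
  qed
qed

lemma iso_result: "iso (restr (PG n) Z) (PG k :: (nat \<Rightarrow> 'f) set matroid)"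
proof -
  have "isof g (PG k :: (nat \<Rightarrow> 'f) set matroid) (restr (PG n) Z)"
    unfolding isof_def
  proof (intro conjI allI impI)
    show "bij_betw g (gnd (PG k :: (nat \<Rightarrow> 'f) set matroid)) (gnd (restr (PG n) Z))"
      using g_inj g_surj by (simp add: bij_betw_def)
    fix X assume X: "X \<subseteq> gnd (PG k :: (nat \<Rightarrow> 'f) set matroid)"
    then have Xk: "X \<subseteq> pg_points k" by simp
    have gX: "g ` X \<subseteq> Z"
    proof
      fix q assume "q \<in> g ` X"
      then obtain P where "P \<in> X" "q = g P" by blast
      then show "q \<in> Z" using g_in Xk by blast
    qed
    have "pg_indep k X \<longleftrightarrow> pg_indep n (g ` X)" by (rule g_indep[OF Xk])
    then show "indep (PG k) X \<longleftrightarrow> indep (restr (PG n) Z) (g ` X)" using gX by simp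
  qed
  then have "isof (inv_into (gnd (PG k :: (nat \<Rightarrow> 'f) set matroid)) g) (restr (PG n) Z) (PG k :: (nat \<Rightarrow> 'f) set matroid)"
    by (rule isof_sym)
  then show ?thesis unfolding iso_isof by blast
qed

end

lemma PG_main:
  fixes Z :: "(nat \<Rightarrow> 'f::field) set set"
  assumes m: "matroid (PG n :: (nat \<Rightarrow> 'f::field) set matroid)" and fl: "flat (PG n) Z"
  shows "\<exists>k. iso (restr (PG n) Z) (PG k :: (nat \<Rightarrow> 'f) set matroid)"
proof -
  obtain B where B: "B \<subseteq> Z" "indep (PG n) B" "card B = rk (PG n) Z" using rk_obtain[OF m, of Z] by (elim exE conjE) (rule that)
  have "finite B" using m_finI[OF m B(2)] .
  then obtain e where e: "bij_betw e {0..<card B} B" using ex_bij_betw_nat_finite[of B] by blast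
  have e': "bij_betw e {..<card B} B" using e by (simp add: lessThan_atLeast0)
  have Bi: "pg_indep n B" using B(2) by simp
  have "pgctx n Z B (card B) e"
    by (rule pgctx.intro[OF m fl B(1) Bi B(3) refl e'])
  then have "iso (restr (PG n) Z) (PG (card B) :: (nat \<Rightarrow> 'f) set matroid)" by (rule pgctx.iso_result)
  then show ?thesis by (rule exI)
qed




lemma isof_flat:
  assumes m: "matroid M" and n: "matroid N" and h: "isof f M N" and X: "flat M X"
  shows "flat N (f ` X)"
proof -
  have b: "bij_betw f (gnd M) (gnd N)" using h by (simp add: isof_def)
  have inj: "inj_on f (gnd M)" using b by (simp add: bij_betw_def)
  have XM: "X \<subseteq> gnd M" using X by (simp add: flat_def)
  have s: "\<And>Y. indep N Y \<Longrightarrow> Y \<subseteq> gnd N" using m_sub[OF n] .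
  show ?thesis unfolding flat_def
  proof (intro conjI ballI)
    show "f ` X \<subseteq> gnd N" using b XM by (auto simp: bij_betw_def)
    fix e' assume e': "e' \<in> gnd N - f ` X"
    then obtain e where e: "e \<in> gnd M" "e' = f e" using b by (auto simp: bij_betw_def)
    have eX: "e \<notin> X" using e e' by blast
    then have "rk M X < rk M (insert e X)" using X e by (auto simp: flat_def)
    moreover have "rk N (f ` X) = rk M X" using isof_rk[OF m h s XM] .
    moreover have "insert e X \<subseteq> gnd M" using XM e by blast
    then have "rk N (f ` insert e X) = rk M (insert e X)" using isof_rk[OF m h s] by blast
    ultimately show "rk N (f ` X) < rk N (insert e' (f ` X))" using e by simp
  qed
qed

lemma PG_restr:
  fixes F :: "'f::{finite,field} itself"
  assumes m: "matroid M" and P: "is_PG F M" and X: "flat M X"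
  shows "is_PG F (restr M X)"
proof -
  obtain n where "iso M (PG n :: (nat \<Rightarrow> 'f) set matroid)" using P by (auto simp: is_PG_def)
  then obtain f where f: "isof f M (PG n :: (nat \<Rightarrow> 'f) set matroid)" by (auto simp: iso_isof)
  have s: "\<And>Y. indep (PG n :: (nat \<Rightarrow> 'f) set matroid) Y \<Longrightarrow> Y \<subseteq> gnd (PG n :: (nat \<Rightarrow> 'f) set matroid)"
    by (simp add: pg_indep_def)
  have mP: "matroid (PG n :: (nat \<Rightarrow> 'f) set matroid)" using iso_matroid[OF m f s] .
  have fl: "flat (PG n :: (nat \<Rightarrow> 'f) set matroid) (f ` X)" using isof_flat[OF m mP f X] .
  obtain k where k: "iso (restr (PG n) (f ` X)) (PG k :: (nat \<Rightarrow> 'f) set matroid)" using PG_main[OF mP fl] by blast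
  have "iso (restr M X) (restr (PG n :: (nat \<Rightarrow> 'f) set matroid) (f ` X))"
    using isof_restr[OF f] X by (auto simp: iso_isof flat_def)
  then have "iso (restr M X) (PG k :: (nat \<Rightarrow> 'f) set matroid)" using iso_trans k by blast
  then show ?thesis by (auto simp: is_PG_def)
qed

lemma chordal_matroid: "chordal F M \<Longrightarrow> matroid M"
  by (induction rule: chordal.induct) (auto simp: simple_matroid_def is_gpc_def)

lemma restr_restr: "B \<subseteq> A \<Longrightarrow> restr (restr M A) B = restr M B"
  unfolding restr_def indep_def by auto

lemma restr_eq_sub: "restr M1 T = restr M2 T \<Longrightarrow> B \<subseteq> T \<Longrightarrow> restr M1 B = restr M2 B"
  by (metis restr_restr)

lemma main: "chordal F M \<Longrightarrow> flat M X \<Longrightarrow> chordal F (restr M X)"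
proof (induction arbitrary: X rule: chordal.induct)
  case (base M)
  have m: "matroid M" using base.hyps by (simp add: simple_matroid_def)
  have XM: "X \<subseteq> gnd M" using base.prems by (simp add: flat_def)
  have "simple_matroid (restr M X)"
    unfolding simple_matroid_def using matroid_restr[OF m XM] base.hyps XM
    by (auto simp: simple_matroid_def)
  moreover have "is_PG F (restr M X)" using PG_restr[OF m base.hyps(2) base.prems] .
  ultimately show ?case by (rule chordal.base)
next
  case (gpc M1 M2 M)
  let ?E1 = "gnd M1" and ?E2 = "gnd M2"
  let ?T = "gnd M1 \<inter> gnd M2"
  have m1: "matroid M1" using gpc.hyps(1) by (rule chordal_matroid)
  have m2: "matroid M2" using gpc.hyps(2) by (rule chordal_matroid)
  have m: "matroid M" using gpc.hyps(6) by (simp add: is_gpc_def)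
  have gM: "gnd M = ?E1 \<union> ?E2" using gpc.hyps(6) by (simp add: is_gpc_def)
  have flM: "\<And>Z. flat M Z \<longleftrightarrow> Z \<subseteq> gnd M \<and> flat M1 (Z \<inter> ?E1) \<and> flat M2 (Z \<inter> ?E2)"
    using gpc.hyps(6) by (simp add: is_gpc_def)
  have XM: "X \<subseteq> gnd M" using gpc.prems by (simp add: flat_def)
  have X1: "flat M1 (X \<inter> ?E1)" and X2: "flat M2 (X \<inter> ?E2)" using flM gpc.prems by auto
  have c1: "chordal F (restr M1 (X \<inter> ?E1))" using gpc.IH(1)[OF X1] .
  have c2: "chordal F (restr M2 (X \<inter> ?E2))" using gpc.IH(2)[OF X2] .
  have gi: "gnd (restr M1 (X \<inter> ?E1)) \<inter> gnd (restr M2 (X \<inter> ?E2)) = X \<inter> ?T" by auto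
  have Tfl: "flat M1 ?T" using gpc.hyps(3) by (simp add: modular_flat_def)
  have mod: "modular_flat (restr M1 (X \<inter> ?E1)) (X \<inter> ?T)"
  proof -
    have "modular_flat (restr M1 (X \<inter> ?E1)) (?T \<inter> (X \<inter> ?E1))"
      using modular_restr[OF m1 gpc.hyps(3) X1] .
    moreover have "?T \<inter> (X \<inter> ?E1) = X \<inter> ?T" by auto
    ultimately show ?thesis by simp
  qed
  have sub1: "X \<inter> ?T \<subseteq> X \<inter> ?E1" and sub2: "X \<inter> ?T \<subseteq> X \<inter> ?E2" and subT: "X \<inter> ?T \<subseteq> ?T"
    by blast+
  have r1: "restr (restr M1 (X \<inter> ?E1)) (X \<inter> ?T) = restr M1 (X \<inter> ?T)" using restr_restr[OF sub1] .
  have r2: "restr (restr M2 (X \<inter> ?E2)) (X \<inter> ?T) = restr M2 (X \<inter> ?T)" using restr_restr[OF sub2] .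
  have r3: "restr M1 (X \<inter> ?T) = restr M2 (X \<inter> ?T)" using restr_eq_sub[OF gpc.hyps(4) subT] .
  have req: "restr (restr M1 (X \<inter> ?E1)) (X \<inter> ?T) = restr (restr M2 (X \<inter> ?E2)) (X \<inter> ?T)"
    unfolding r1 r2 r3 ..
  have pg: "is_PG F (restr (restr M1 (X \<inter> ?E1)) (X \<inter> ?T))"
  proof -
    have mT: "matroid (restr M1 ?T)" using matroid_restr[OF m1 Int_lower1] .
    have "flat M1 (X \<inter> ?E1 \<inter> ?T)" using flat_Int[OF m1 X1 Tfl] .
    moreover have "X \<inter> ?E1 \<inter> ?T = X \<inter> ?T" by blast
    ultimately have "flat M1 (X \<inter> ?T)" by simp
    then have "flat (restr M1 ?T) (X \<inter> ?T)" using flat_restr[OF m1 Tfl] subT by blast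
    then have "is_PG F (restr (restr M1 ?T) (X \<inter> ?T))" by (rule PG_restr[OF mT gpc.hyps(5)])
    then show ?thesis unfolding r1 restr_restr[OF subT] .
  qed
  have gpcX: "is_gpc (restr M1 (X \<inter> ?E1)) (restr M2 (X \<inter> ?E2)) (restr M X)"
    unfolding is_gpc_def
  proof (intro conjI allI)
    show "matroid (restr M X)" using matroid_restr[OF m XM] .
    show "gnd (restr M X) = gnd (restr M1 (X \<inter> ?E1)) \<union> gnd (restr M2 (X \<inter> ?E2))" using XM gM by auto
    fix Z
    have "flat (restr M X) Z \<longleftrightarrow> Z \<subseteq> X \<and> flat M Z" using flat_restr[OF m gpc.prems] .
    also have "\<dots> \<longleftrightarrow> Z \<subseteq> X \<and> flat M1 (Z \<inter> ?E1) \<and> flat M2 (Z \<inter> ?E2)" using flM XM by blast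
    also have "\<dots> \<longleftrightarrow> Z \<subseteq> gnd (restr M X) \<and> flat (restr M1 (X \<inter> ?E1)) (Z \<inter> gnd (restr M1 (X \<inter> ?E1)))
          \<and> flat (restr M2 (X \<inter> ?E2)) (Z \<inter> gnd (restr M2 (X \<inter> ?E2)))"
    proof -
      have "\<And>A. Z \<subseteq> X \<Longrightarrow> Z \<inter> (X \<inter> A) = Z \<inter> A" by auto
      then show ?thesis using flat_restr[OF m1 X1] flat_restr[OF m2 X2] by auto
    qed
    finally show "flat (restr M X) Z \<longleftrightarrow> Z \<subseteq> gnd (restr M X) \<and> flat (restr M1 (X \<inter> ?E1)) (Z \<inter> gnd (restr M1 (X \<inter> ?E1)))
          \<and> flat (restr M2 (X \<inter> ?E2)) (Z \<inter> gnd (restr M2 (X \<inter> ?E2)))" .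
  qed
  show ?case
    apply (rule chordal.gpc[OF c1 c2])
    using mod req pg gpcX unfolding gi by auto
qed


theorem lemma2p2:
  fixes F :: "'f::{finite,field} itself" and M :: "'a matroid" and X :: "'a set"
  assumes "chordal F M" and "flat M X"
  shows "chordal F (restr M X)"
  using main[OF assms] .

end
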